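(* Let $\Psi$ be a marked $A_3$ simplicial complex satisfying CCCC. (iii.a) If $v,u_1,w,u_2$ is an embedded closed edge path in $\Psi$ with $v$ of type $\hat b$, $u_1,u_2$ of type $\hat c$ and $w$ of type $\hat a$, then $v$ and $w$ are joined by an edge and $\{v,u_1,w\}$ and $\{v,w,u_2\}$ are $2$-simplices of $\Psi$. (iii.b) The same holds with the types $\hat a$ and $\hat c$ interchanged.
   Context: Let $\Delta$ be the spherical triangle with vertices labelled $\hat a,\hat b,\hat c$, with angle $\pi/3$ at $\hat a$ and $\hat c$ and angle $\pi/2$ at $\hat b$. A marked $A_3$ simplicial complex is a homogeneous $2$-dimensional simplicial complex $\Psi$ in which each $2$-simplex $\sigma$ has an isomorphism $m_\sigma:\sigma\to\Delta$ such that $m_\sigma(x)=m_{\sigma'}(x)$ for all $x\in\sigma\cap\sigma'$; a vertex has type $\hat a,\hat b,\hat c$ according to the label of its image under any marking. $\Psi$ satisfies CCCC if: (1) the link of every vertex of type $\hat a$ or $\hat c$ has girth at least $6$; (2) the link of every vertex of type $\hat b$ is a complete bipartite graph containing an embedded $4$-cycle; (3) (i) every embedded closed edge path $w_1,u_1,w_2,u_2$ with $w_1,w_2$ of type $\hat a$ and $u_1,u_2$ of type $\hat c$ is filled by a vertex $v$ of type $\hat b$ such that $\{v,w_1,u_1\},\{v,u_1,w_2\},\{v,w_2,u_2\},\{v,u_2,w_1\}$ are $2$-simplices; (ii.a) every embedded closed edge path of length $6$ alternating between types $\hat a$ and $\hat b$ is filled by a vertex of type $\hat c$ forming a $2$-simplex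 with each of its six edges; (ii.b) the same with $\hat a$ and $\hat c$ interchanged. *)

theory Defs
  imports Main
begin

datatype vtype = TA | TB | TC

text \<open>A homogeneous 2-dimensional simplicial complex is given by its set \<open>T\<close> of
  2-simplices (3-element vertex sets); all other simplices are faces of these.
  A marking (compatible isomorphisms of every 2-simplex to the model triangle
  \<open>\<Delta>\<close>) is the same as a type function on vertices that is a bijection of every
  2-simplex onto the three labels.\<close>
definition marked_A3 :: "'v set set \<Rightarrow> ('v \<Rightarrow> vtype) \<Rightarrow> bool" where
  "marked_A3 T tp \<longleftrightarrow> (\<forall>\<sigma>\<in>T. finite \<sigma> \<and> card \<sigma> = 3 \<and> tp ` \<sigma> = UNIV)"

definition edge :: "'v set set \<Rightarrow> 'v \<Rightarrow> 'v \<Rightarrow> bool" where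
  "edge T x y \<longleftrightarrow> x \<noteq> y \<and> (\<exists>\<sigma>\<in>T. x \<in> \<sigma> \<and> y \<in> \<sigma>)"

definition link_adj :: "'v set set \<Rightarrow> 'v \<Rightarrow> 'v \<Rightarrow> 'v \<Rightarrow> bool" where
  "link_adj T x y z \<longleftrightarrow> y \<noteq> z \<and> {x, y, z} \<in> T"

definition closed_path :: "('v \<Rightarrow> 'v \<Rightarrow> bool) \<Rightarrow> 'v list \<Rightarrow> bool" where
  "closed_path adj xs \<longleftrightarrow> distinct xs \<and> length xs \<ge> 3 \<and>
     (\<forall>i < length xs. adj (xs ! i) (xs ! ((i + 1) mod length xs)))"

definition girth_ge :: "('v \<Rightarrow> 'v \<Rightarrow> bool) \<Rightarrow> nat \<Rightarrow> bool" where
  "girth_ge adj n \<longleftrightarrow> (\<forall>xs. closed_path adj xs \<longrightarrow> length xs \<ge> n)"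

definition complete_bipartite_link :: "'v set set \<Rightarrow> 'v \<Rightarrow> bool" where
  "complete_bipartite_link T x \<longleftrightarrow>
     (\<exists>P Q. P \<inter> Q = {} \<and> P \<union> Q = {y. edge T x y} \<and>
        (\<forall>y z. link_adj T x y z \<longleftrightarrow> (y \<in> P \<and> z \<in> Q \<or> y \<in> Q \<and> z \<in> P)))"

definition CCCC :: "'v set set \<Rightarrow> ('v \<Rightarrow> vtype) \<Rightarrow> bool" where
  "CCCC T tp \<longleftrightarrow>
    \<comment> \<open>(1)\<close>
    (\<forall>x\<in>\<Union>T. tp x \<in> {TA, TC} \<longrightarrow> girth_ge (link_adj T x) 6) \<and>
    \<comment> \<open>(2)\<close>
    (\<forall>x\<in>\<Union>T. tp x = TB \<longrightarrow> complete_bipartite_link T x \<and>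
        (\<exists>xs. closed_path (link_adj T x) xs \<and> length xs = 4)) \<and>
    \<comment> \<open>(3)(i)\<close>
    (\<forall>w1 u1 w2 u2. closed_path (edge T) [w1, u1, w2, u2] \<and>
        tp w1 = TA \<and> tp w2 = TA \<and> tp u1 = TC \<and> tp u2 = TC \<longrightarrow>
        (\<exists>v. tp v = TB \<and> {v, w1, u1} \<in> T \<and> {v, u1, w2} \<in> T \<and>
             {v, w2, u2} \<in> T \<and> {v, u2, w1} \<in> T)) \<and>
    \<comment> \<open>(3)(ii.a)\<close>
    (\<forall>xs. closed_path (edge T) xs \<and> length xs = 6 \<and>
        (\<forall>i<6. tp (xs ! i) \<in> {TA, TB} \<and> tp (xs ! i) \<noteq> tp (xs ! ((i + 1) mod 6))) \<longrightarrow>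
        (\<exists>v. tp v = TC \<and> (\<forall>i<6. {v, xs ! i, xs ! ((i + 1) mod 6)} \<in> T))) \<and>
    \<comment> \<open>(3)(ii.b)\<close>
    (\<forall>xs. closed_path (edge T) xs \<and> length xs = 6 \<and>
        (\<forall>i<6. tp (xs ! i) \<in> {TC, TB} \<and> tp (xs ! i) \<noteq> tp (xs ! ((i + 1) mod 6))) \<longrightarrow>
        (\<exists>v. tp v = TA \<and> (\<forall>i<6. {v, xs ! i, xs ! ((i + 1) mod 6)} \<in> T)))"

end

theory Submission
  imports Defs
begin

lemma all4: "(\<forall>i<(4::nat). Q i) \<longleftrightarrow> Q 0 \<and> Q 1 \<and> Q 2 \<and> Q 3"
  by (auto simp: less_Suc_eq eval_nat_numeral)
lemma cp4: "closed_path adj [a,b,c,d] \<longleftrightarrow> distinct [a,b,c,d] \<and> adj a b \<and> adj b c \<and> adj c d \<and> adj d a"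
proof -
  have l: "length [a,b,c,d] = 4" by simp
  show ?thesis unfolding closed_path_def l all4 by simp
qed

lemma three_univ:
  assumes "{x::vtype, y, z} = UNIV" shows "x \<noteq> y \<and> y \<noteq> z \<and> x \<noteq> z"
proof -
  have "TA \<in> {x,y,z}" "TB \<in> {x,y,z}" "TC \<in> {x,y,z}" using assms by auto
  then show ?thesis by (cases x; cases y; cases z) auto
qed

lemma tri:
  assumes "marked_A3 T tp" "{x,y,z} \<in> T"
  shows "tp x \<noteq> tp y \<and> tp y \<noteq> tp z \<and> tp x \<noteq> tp z"
proof -
  have "tp ` {x,y,z} = UNIV" using assms unfolding marked_A3_def by blast
  then show ?thesis using three_univ by auto
qed

lemma edge_tri:
  assumes M: "marked_A3 T tp" and e: "edge T x y" and t: "t \<noteq> tp x" "t \<noteq> tp y"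
  shows "\<exists>z. tp z = t \<and> {x,y,z} \<in> T"
proof -
  obtain \<sigma> where s: "\<sigma> \<in> T" "x \<in> \<sigma>" "y \<in> \<sigma>" and xy: "x \<noteq> y" using e unfolding edge_def by blast
  have f: "finite \<sigma>" "card \<sigma> = 3" "tp ` \<sigma> = UNIV" using M s unfolding marked_A3_def by auto
  then obtain z where z: "z \<in> \<sigma>" "tp z = t" by (metis UNIV_I imageE)
  have "z \<noteq> x" "z \<noteq> y" using z t by auto
  then have "card {x,y,z} = 3" using xy by auto
  moreover have "{x,y,z} \<subseteq> \<sigma>" using s z by auto
  ultimately have "{x,y,z} = \<sigma>" using f by (metis card_subset_eq)
  then show ?thesis using s z by auto
qed

lemma edge_sym: "edge T x y \<Longrightarrow> edge T y x"
  unfolding edge_def by blast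

lemma tri_edge: "{x,y,z} \<in> T \<Longrightarrow> x \<noteq> y \<Longrightarrow> edge T x y"
  unfolding edge_def by blast

lemma core:
  assumes M: "marked_A3 T tp"
  and girth: "\<forall>x\<in>\<Union>T. tp x = \<alpha> \<longrightarrow> girth_ge (link_adj T x) 6"
  and cbl: "\<forall>x\<in>\<Union>T. tp x = TB \<longrightarrow> complete_bipartite_link T x"
  and fill: "\<forall>w a u1 u2. w \<noteq> a \<and> u1 \<noteq> u2 \<and> tp w = \<alpha> \<and> tp a = \<alpha> \<and> tp u1 = \<gamma> \<and> tp u2 = \<gamma>
      \<and> edge T w u1 \<and> edge T u1 a \<and> edge T a u2 \<and> edge T u2 w \<longrightarrow>
      (\<exists>v'. tp v' = TB \<and> {v',w,u1}\<in>T \<and> {v',u1,a}\<in>T \<and> {v',a,u2}\<in>T \<and> {v',u2,w}\<in>T)"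
  and ty: "\<alpha> \<noteq> TB" "\<gamma> \<noteq> TB" "\<alpha> \<noteq> \<gamma>"
  and cp: "closed_path (edge T) [v,u1,w,u2]" and tv: "tp v = TB" "tp u1 = \<gamma>" "tp u2 = \<gamma>" "tp w = \<alpha>"
  shows "edge T v w \<and> {v,u1,w}\<in>T \<and> {v,w,u2}\<in>T"
proof -
  have d: "distinct [v,u1,w,u2]" and e1: "edge T v u1" and e2: "edge T u1 w"
    and e3: "edge T w u2" and e4: "edge T u2 v" using cp unfolding cp4 by auto
  have n1: "\<alpha> \<noteq> tp v" "\<alpha> \<noteq> tp u1" "\<alpha> \<noteq> tp u2" using ty tv by simp_all
  obtain a1 where a1: "tp a1 = \<alpha>" "{v,u1,a1} \<in> T" using edge_tri[OF M e1 n1(1,2)] by blast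
  obtain a2 where a2: "tp a2 = \<alpha>" "{v,u2,a2} \<in> T" using edge_tri[OF M edge_sym[OF e4] n1(1,3)] by blast
  have vT: "v \<in> \<Union>T" using a1 by blast
  have va: "{v,a1,u2} \<in> T"
  proof (cases "a1 = a2")
    case True
    have "{v,a1,u2} = {v,u2,a2}" using True by blast
    then show ?thesis using a2 by simp
  next
    case False
    have "complete_bipartite_link T v" using cbl vT tv by blast
    then obtain P Q where PQ0: "P \<inter> Q = {} \<and> P \<union> Q = {y. edge T v y} \<and>
        (\<forall>y z. link_adj T v y z \<longleftrightarrow> (y \<in> P \<and> z \<in> Q \<or> y \<in> Q \<and> z \<in> P))"
      unfolding complete_bipartite_link_def by (elim exE) (rule that)
    then have PQa: "\<forall>y z. link_adj T v y z \<longleftrightarrow> (y \<in> P \<and> z \<in> Q \<or> y \<in> Q \<and> z \<in> P)"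
      by (elim conjE)
    note PQ = PQa[rule_format]
    have s1: "{v,a1,u1} = {v,u1,a1}" by blast
    have s2: "{v,u2,a2} = {v,u2,a2}" by blast
    have "a1 \<noteq> u1" using a1 tv ty by auto
    then have l1: "link_adj T v a1 u1" using a1 s1 unfolding link_adj_def by simp
    have "u2 \<noteq> a2" using a2 tv ty by auto
    then have l2: "link_adj T v u2 a2" using a2 unfolding link_adj_def by simp
    have n12: "\<not> link_adj T v a1 a2"
    proof
      assume "link_adj T v a1 a2"
      then have "{v,a1,a2} \<in> T" unfolding link_adj_def by simp
      from tri[OF M this] a1 a2 show False by simp
    qed
    have i1: "(a1 \<in> P \<and> u1 \<in> Q \<or> a1 \<in> Q \<and> u1 \<in> P)" using l1 PQ[of a1 u1] by simp
    have i2: "(u2 \<in> P \<and> a2 \<in> Q \<or> u2 \<in> Q \<and> a2 \<in> P)" using l2 PQ[of u2 a2] by simp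
    have i3: "\<not> (a1 \<in> P \<and> a2 \<in> Q \<or> a1 \<in> Q \<and> a2 \<in> P)" using n12 PQ[of a1 a2] by simp
    have "(a1 \<in> P \<and> u2 \<in> Q \<or> a1 \<in> Q \<and> u2 \<in> P)" using i1 i2 i3 by blast
    then have "link_adj T v a1 u2" using PQ[of a1 u2] by simp
    then show ?thesis unfolding link_adj_def by simp
  qed
  define a where "a = a1"
  have t1: "{v,u1,a} \<in> T" and t2: "{v,a,u2} \<in> T" and ta: "tp a = \<alpha>" using a1 va a_def by auto
  show ?thesis
  proof (cases "w = a")
    case True
    have "{v,u1,w} \<in> T" "{v,w,u2} \<in> T" using t1 t2 True by simp_all
    moreover have "v \<noteq> w" using d by simp
    ultimately show ?thesis using tri_edge[of v w u2 T] by simp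
  next
    case False
    have ew: "edge T w u1" using edge_sym[OF e2] .
    have "{u1,a,v} = {v,u1,a}" by blast
    moreover have "u1 \<noteq> a" using ta tv ty by auto
    ultimately have eu: "edge T u1 a" using t1 tri_edge[of u1 a v T] by simp
    have "{a,u2,v} = {v,a,u2}" by blast
    moreover have "a \<noteq> u2" using ta tv ty by auto
    ultimately have ea: "edge T a u2" using t2 tri_edge[of a u2 v T] by simp
    have u12: "u1 \<noteq> u2" using d by simp
    have hf: "w \<noteq> a \<and> u1 \<noteq> u2 \<and> tp w = \<alpha> \<and> tp a = \<alpha> \<and> tp u1 = \<gamma> \<and> tp u2 = \<gamma>
      \<and> edge T w u1 \<and> edge T u1 a \<and> edge T a u2 \<and> edge T u2 w"
      using False u12 ta tv ew eu ea edge_sym[OF e3] by simp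
    obtain v' where v': "tp v' = TB" "{v',w,u1}\<in>T" "{v',u1,a}\<in>T" "{v',a,u2}\<in>T" "{v',u2,w}\<in>T"
      using fill[rule_format, OF hf] by blast
    show ?thesis
    proof (cases "v' = v")
      case True
      have "{v,u1,w} = {v',w,u1}" "{v,w,u2} = {v',u2,w}" using True by blast+
      then have "{v,u1,w} \<in> T" "{v,w,u2} \<in> T" using v' by simp_all
      moreover have "v \<noteq> w" using d by simp
      ultimately show ?thesis using tri_edge[of v w u2 T] by simp
    next
      case False
      have q1: "{a,v,u1} = {v,u1,a}" "{a,u1,v'} = {v',u1,a}" "{a,v',u2} = {v',a,u2}" "{a,u2,v} = {v,a,u2}"
        by blast+
      have "distinct [v,u1,v',u2]" using False d v' tv ty by auto
      moreover have "link_adj T a v u1" "link_adj T a u1 v'" "link_adj T a v' u2" "link_adj T a u2 v"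
        unfolding link_adj_def q1 using t1 t2 v' d tv ty by auto
      ultimately have "closed_path (link_adj T a) [v,u1,v',u2]" unfolding cp4 by simp
      moreover have "a \<in> \<Union>T" using t1 by blast
      ultimately have "length [v,u1,v',u2] \<ge> 6" using girth ta unfolding girth_ge_def by blast
      then show ?thesis by simp
    qed
  qed
qed

theorem lemma5p6:
  fixes T :: "'v set set" and tp :: "'v \<Rightarrow> vtype"
  assumes "marked_A3 T tp" and "CCCC T tp"
  shows "(\<forall>v u1 w u2. closed_path (edge T) [v, u1, w, u2] \<and>
            tp v = TB \<and> tp u1 = TC \<and> tp u2 = TC \<and> tp w = TA \<longrightarrow>
            edge T v w \<and> {v, u1, w} \<in> T \<and> {v, w, u2} \<in> T) \<and>
         (\<forall>v u1 w u2. closed_path (edge T) [v, u1, w, u2] \<and>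
            tp v = TB \<and> tp u1 = TA \<and> tp u2 = TA \<and> tp w = TC \<longrightarrow>
            edge T v w \<and> {v, u1, w} \<in> T \<and> {v, w, u2} \<in> T)"
proof -
  have g: "\<forall>x\<in>\<Union>T. tp x \<in> {TA, TC} \<longrightarrow> girth_ge (link_adj T x) 6"
    and cb: "\<forall>x\<in>\<Union>T. tp x = TB \<longrightarrow> complete_bipartite_link T x"
    and f: "\<forall>w1 u1 w2 u2. closed_path (edge T) [w1, u1, w2, u2] \<and>
        tp w1 = TA \<and> tp w2 = TA \<and> tp u1 = TC \<and> tp u2 = TC \<longrightarrow>
        (\<exists>v. tp v = TB \<and> {v, w1, u1} \<in> T \<and> {v, u1, w2} \<in> T \<and>
             {v, w2, u2} \<in> T \<and> {v, u2, w1} \<in> T)"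
    using assms(2) unfolding CCCC_def by auto
  have fA: "\<forall>w a u1 u2. w \<noteq> a \<and> u1 \<noteq> u2 \<and> tp w = TA \<and> tp a = TA \<and> tp u1 = TC \<and> tp u2 = TC
      \<and> edge T w u1 \<and> edge T u1 a \<and> edge T a u2 \<and> edge T u2 w \<longrightarrow>
      (\<exists>v'. tp v' = TB \<and> {v',w,u1}\<in>T \<and> {v',u1,a}\<in>T \<and> {v',a,u2}\<in>T \<and> {v',u2,w}\<in>T)"
  proof (intro allI impI)
    fix w a u1 u2 assume h: "w \<noteq> a \<and> u1 \<noteq> u2 \<and> tp w = TA \<and> tp a = TA \<and> tp u1 = TC \<and> tp u2 = TC
      \<and> edge T w u1 \<and> edge T u1 a \<and> edge T a u2 \<and> edge T u2 w"
    then have "closed_path (edge T) [w, u1, a, u2]" unfolding cp4 by auto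
    then show "\<exists>v'. tp v' = TB \<and> {v',w,u1}\<in>T \<and> {v',u1,a}\<in>T \<and> {v',a,u2}\<in>T \<and> {v',u2,w}\<in>T"
      using f h by blast
  qed
  have fC: "\<forall>w a u1 u2. w \<noteq> a \<and> u1 \<noteq> u2 \<and> tp w = TC \<and> tp a = TC \<and> tp u1 = TA \<and> tp u2 = TA
      \<and> edge T w u1 \<and> edge T u1 a \<and> edge T a u2 \<and> edge T u2 w \<longrightarrow>
      (\<exists>v'. tp v' = TB \<and> {v',w,u1}\<in>T \<and> {v',u1,a}\<in>T \<and> {v',a,u2}\<in>T \<and> {v',u2,w}\<in>T)"
  proof (intro allI impI)
    fix w a u1 u2 assume h: "w \<noteq> a \<and> u1 \<noteq> u2 \<and> tp w = TC \<and> tp a = TC \<and> tp u1 = TA \<and> tp u2 = TA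
      \<and> edge T w u1 \<and> edge T u1 a \<and> edge T a u2 \<and> edge T u2 w"
    then have "closed_path (edge T) [u1, a, u2, w]" unfolding cp4 by auto
    then obtain v' where "tp v' = TB \<and> {v', u1, a} \<in> T \<and> {v', a, u2} \<in> T \<and>
             {v', u2, w} \<in> T \<and> {v', w, u1} \<in> T" using f h by blast
    then show "\<exists>v'. tp v' = TB \<and> {v',w,u1}\<in>T \<and> {v',u1,a}\<in>T \<and> {v',a,u2}\<in>T \<and> {v',u2,w}\<in>T"
      by blast
  qed
  have gA: "\<forall>x\<in>\<Union>T. tp x = TA \<longrightarrow> girth_ge (link_adj T x) 6" using g by auto
  have gC: "\<forall>x\<in>\<Union>T. tp x = TC \<longrightarrow> girth_ge (link_adj T x) 6" using g by auto
  show ?thesis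
  proof (rule conjI; intro allI impI)
    fix v u1 w u2 assume h: "closed_path (edge T) [v, u1, w, u2] \<and>
            tp v = TB \<and> tp u1 = TC \<and> tp u2 = TC \<and> tp w = TA"
    show "edge T v w \<and> {v, u1, w} \<in> T \<and> {v, w, u2} \<in> T"
      by (rule core[OF assms(1) gA cb fA]) (use h in auto)
  next
    fix v u1 w u2 assume h: "closed_path (edge T) [v, u1, w, u2] \<and>
            tp v = TB \<and> tp u1 = TA \<and> tp u2 = TA \<and> tp w = TC"
    show "edge T v w \<and> {v, u1, w} \<in> T \<and> {v, w, u2} \<in> T"
      by (rule core[OF assms(1) gC cb fC]) (use h in auto)
  qed
qed

end
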